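(* Let $G$ be a finite Coxeter group acting by its geometric realisation on a Euclidean space $V$, with set of simple reflections $S$ and simple roots $e_s$, $s\in S$. Let $J\subset S$ satisfy the $(-1)$-condition and let $\sigma_J$ be the corresponding involution. Then the centraliser $C(\sigma_J)=\{g\in G: g\sigma_J=\sigma_J g\}$ coincides with the normaliser $N(G_J)=\{g\in G: gG_Jg^{-1}=G_J\}$ of the parabolic subgroup $G_J$.
   Context: For $J\subset S$, $G_J$ is the subgroup generated by $J$ and $V_J$ is the subspace of $V$ spanned by $\{e_s: s\in J\}$. $J$ satisfies the $(-1)$-condition if $G_J$ contains an element $\sigma_J$ acting on $V_J$ as $-\mathrm{Id}$; this element acts as the identity on $V_J^\perp$, is uniquely determined and is an involution. *)

theory Defs
  imports "HOL-Analysis.Analysis"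
begin

definition reflection :: "'a::real_inner \<Rightarrow> 'a \<Rightarrow> 'a" where
  "reflection a v = v - (2 * (v \<bullet> a) / (a \<bullet> a)) *\<^sub>R a"

text \<open>The submonoid of maps generated by X under composition. For a finite set of
  involutions generating a finite group this is exactly the generated subgroup.\<close>
inductive_set generated :: "('a \<Rightarrow> 'a) set \<Rightarrow> ('a \<Rightarrow> 'a) set" for X where
  gen_id: "id \<in> generated X"
| gen_step: "x \<in> X \<Longrightarrow> g \<in> generated X \<Longrightarrow> x \<circ> g \<in> generated X"

definition geometric_realisation ::
  "'s set \<Rightarrow> ('s \<Rightarrow> 's \<Rightarrow> nat) \<Rightarrow> ('s \<Rightarrow> 'a::euclidean_space) \<Rightarrow> bool" where
  "geometric_realisation S m e \<longleftrightarrow>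
     finite S \<and> inj_on e S \<and> independent (e ` S) \<and> span (e ` S) = UNIV \<and>
     (\<forall>s\<in>S. e s \<bullet> e s = 1) \<and>
     (\<forall>s\<in>S. \<forall>t\<in>S. s \<noteq> t \<longrightarrow> m s t = m t s \<and> m s t \<ge> 2 \<and>
         e s \<bullet> e t = - cos (pi / real (m s t)))"

definition coxeter_group :: "'s set \<Rightarrow> ('s \<Rightarrow> 'a::real_inner) \<Rightarrow> ('a \<Rightarrow> 'a) set" where
  "coxeter_group J e = generated ((\<lambda>s. reflection (e s)) ` J)"

definition root_span :: "'s set \<Rightarrow> ('s \<Rightarrow> 'a::real_vector) \<Rightarrow> 'a set" where
  "root_span J e = span (e ` J)"

end

theory Submission
  imports Defs
begin

lemma refl_linear: "linear (reflection (a::'a::real_inner))"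
proof (rule linearI)
  fix x y :: 'a and c :: real
  show "reflection a (x + y) = reflection a x + reflection a y"
    unfolding reflection_def by (simp add: inner_add_left add_divide_distrib distrib_left scaleR_add_left)
  show "reflection a (c *\<^sub>R x) = c *\<^sub>R reflection a x"
    unfolding reflection_def by (simp add: scaleR_diff_right)
qed

lemma refl_inner:
  fixes a :: "'a::real_inner"
  assumes "a \<noteq> 0"
  shows "reflection a x \<bullet> reflection a y = x \<bullet> y"
proof -
  have aa: "a \<bullet> a \<noteq> 0" using assms by simp
  define k where "k = 2 * (x \<bullet> a) / (a \<bullet> a)"
  define l where "l = 2 * (y \<bullet> a) / (a \<bullet> a)"
  have "(x - k *\<^sub>R a) \<bullet> (y - l *\<^sub>R a) = x \<bullet> y - l*(x \<bullet> a) - k*(y \<bullet> a) + k*l*(a \<bullet> a)"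
    by (simp add: inner_diff_left inner_diff_right inner_commute[of a x] inner_commute[of a y] algebra_simps)
  moreover have "k*l*(a \<bullet> a) = l*(x \<bullet> a) + k*(y \<bullet> a)"
    unfolding k_def l_def using aa by (simp add: field_simps)
  ultimately show ?thesis unfolding reflection_def k_def[symmetric] l_def[symmetric] by simp
qed

lemma refl_invol:
  fixes a :: "'a::real_inner"
  assumes "a \<noteq> 0"
  shows "reflection a (reflection a x) = x"
proof -
  have aa: "a \<bullet> a \<noteq> 0" using assms by simp
  show ?thesis unfolding reflection_def
    using aa by (simp add: inner_diff_left field_simps scaleR_diff_left[symmetric])
qed

lemma refl_comp_self: "(a::'a::real_inner) \<noteq> 0 \<Longrightarrow> reflection a \<circ> reflection a = id"
  by (auto simp: refl_invol)

lemma refl_self: "(a::'a::real_inner) \<noteq> 0 \<Longrightarrow> reflection a a = - a"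
  unfolding reflection_def by (simp add: algebra_simps scaleR_2)

lemma refl_orth: "x \<bullet> (a::'a::real_inner) = 0 \<Longrightarrow> reflection a x = x"
  unfolding reflection_def by simp

lemma refl_neg: "reflection (- a) = reflection (a::'a::real_inner)"
  unfolding reflection_def by (auto simp: fun_eq_iff)

lemma refl_conj:
  fixes f :: "'a::real_inner \<Rightarrow> 'a"
  assumes lin: "linear f" and inn: "\<And>x y. f x \<bullet> f y = x \<bullet> y" and b: "bij f"
  shows "f \<circ> reflection a \<circ> inv f = reflection (f a)"
proof
  fix v
  have fi: "f (inv f v) = v" using b by (simp add: bij_is_surj surj_f_inv_f)
  have "(inv f v) \<bullet> a = v \<bullet> f a" using inn[of "inv f v" a] fi by simp
  moreover have "a \<bullet> a = f a \<bullet> f a" using inn by simp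
  ultimately show "(f \<circ> reflection a \<circ> inv f) v = reflection (f a) v"
    unfolding reflection_def using fi by (simp add: linear_diff[OF lin] linear_scale[OF lin])
qed

lemma gen_comp: "f \<in> generated X \<Longrightarrow> g \<in> generated X \<Longrightarrow> f \<circ> g \<in> generated X"
  by (induction f rule: generated.induct) (auto simp: comp_assoc intro: generated.intros)

lemma gen_mono: "f \<in> generated X \<Longrightarrow> X \<subseteq> Y \<Longrightarrow> f \<in> generated Y"
  by (induction f rule: generated.induct) (auto intro: generated.intros)

lemma gen_gen: "x \<in> X \<Longrightarrow> x \<in> generated X"
  using generated.gen_step[OF _ generated.gen_id, of x X] by simp

lemma gen_inverse:
  assumes "\<And>x. x \<in> X \<Longrightarrow> x \<circ> x = id"
  shows "f \<in> generated X \<Longrightarrow> \<exists>f'\<in>generated X. f' \<circ> f = id \<and> f \<circ> f' = id"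
proof (induction f rule: generated.induct)
  case gen_id then show ?case using generated.gen_id[of X] by (metis id_comp)
next
  case (gen_step x g)
  then obtain g' where g': "g' \<in> generated X" "g' \<circ> g = id" "g \<circ> g' = id" by blast
  have xx: "x \<circ> x = id" using assms gen_step by blast
  have "g' \<circ> x \<in> generated X" using g' gen_comp gen_gen gen_step by blast
  moreover have "(g' \<circ> x) \<circ> (x \<circ> g) = id"
    by (metis comp_assoc comp_id g'(2) xx)
  moreover have "(x \<circ> g) \<circ> (g' \<circ> x) = id"
    by (metis comp_assoc comp_id g'(3) xx)
  ultimately show ?case by blast
qed

lemma gen_prop:
  assumes "P id" "\<And>x g. x \<in> X \<Longrightarrow> P g \<Longrightarrow> P (x \<circ> g)"
  shows "f \<in> generated X \<Longrightarrow> P f"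
proof (induction f rule: generated.induct)
  case gen_id then show ?case using assms(1) .
next
  case (gen_step x g) then show ?case using assms(2) by blast
qed

definition eval :: "('s \<Rightarrow> 'a::real_inner) \<Rightarrow> 's list \<Rightarrow> 'a \<Rightarrow> 'a" where
  "eval e ws = foldr (\<lambda>x g. reflection (e x) \<circ> g) ws id"

lemma eval_Nil[simp]: "eval e [] = id" by (simp add: eval_def)
lemma eval_Cons[simp]: "eval e (x # ws) = reflection (e x) \<circ> eval e ws" by (simp add: eval_def)
lemma eval_append[simp]: "eval e (xs @ ys) = eval e xs \<circ> eval e ys"
  by (induction xs) (auto simp: comp_assoc)

lemma gen_eval: "generated ((\<lambda>s. reflection (e s)) ` X) = {eval e ws | ws. set ws \<subseteq> X}"
proof
  show "generated ((\<lambda>s. reflection (e s)) ` X) \<subseteq> {eval e ws |ws. set ws \<subseteq> X}"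
  proof
    fix f assume "f \<in> generated ((\<lambda>s. reflection (e s)) ` X)"
    then show "f \<in> {eval e ws |ws. set ws \<subseteq> X}"
    proof (induction f rule: generated.induct)
      case gen_id then show ?case by (auto intro!: exI[of _ "[]"])
    next
      case (gen_step x g)
      then obtain s ws where "s \<in> X" "x = reflection (e s)" "set ws \<subseteq> X" "g = eval e ws" by auto
      then show ?case by (auto intro!: exI[of _ "s # ws"])
    qed
  qed
next
  show "{eval e ws |ws. set ws \<subseteq> X} \<subseteq> generated ((\<lambda>s. reflection (e s)) ` X)"
  proof clarify
    fix ws assume "set ws \<subseteq> X"
    then show "eval e ws \<in> generated ((\<lambda>s. reflection (e s)) ` X)"
    proof (induction ws)
      case Nil then show ?case by (simp only: eval_Nil) (rule generated.gen_id)
    next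
      case (Cons a ws) then show ?case by (simp only: eval_Cons) (rule generated.gen_step, auto)
    qed
  qed
qed

definition wlen :: "('s \<Rightarrow> 'a::real_inner) \<Rightarrow> 's set \<Rightarrow> ('a \<Rightarrow> 'a) \<Rightarrow> nat" where
  "wlen e X g = (LEAST n. \<exists>ws. set ws \<subseteq> X \<and> length ws = n \<and> eval e ws = g)"

lemma wlen_le: "set ws \<subseteq> X \<Longrightarrow> eval e ws = g \<Longrightarrow> wlen e X g \<le> length ws"
  unfolding wlen_def by (rule Least_le) blast

lemma wlen_ex:
  assumes "g \<in> generated ((\<lambda>s. reflection (e s)) ` X)"
  shows "\<exists>ws. set ws \<subseteq> X \<and> length ws = wlen e X g \<and> eval e ws = g"
proof -
  have "g \<in> {eval e ws | ws. set ws \<subseteq> X}" using assms unfolding gen_eval .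
  then obtain ws where "set ws \<subseteq> X" "eval e ws = g" by auto
  then have ex: "\<exists>n ws. set ws \<subseteq> X \<and> length ws = n \<and> eval e ws = g" by blast
  show ?thesis unfolding wlen_def by (rule LeastI_ex[OF ex])
qed

lemma wlen_mono:
  assumes "g \<in> generated ((\<lambda>s. reflection (e s)) ` I)" "I \<subseteq> X"
  shows "wlen e X g \<le> wlen e I g"
proof -
  obtain ws where "set ws \<subseteq> I" "length ws = wlen e I g" "eval e ws = g" using wlen_ex[OF assms(1)] by blast
  then show ?thesis using wlen_le[of ws X e g] assms(2) by auto
qed

lemma wlen_comp:
  assumes "f \<in> generated ((\<lambda>s. reflection (e s)) ` X)" "g \<in> generated ((\<lambda>s. reflection (e s)) ` X)"
  shows "wlen e X (f \<circ> g) \<le> wlen e X f + wlen e X g"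
proof -
  obtain ws where "set ws \<subseteq> X" "length ws = wlen e X f" "eval e ws = f" using wlen_ex[OF assms(1)] by blast
  moreover obtain vs where "set vs \<subseteq> X" "length vs = wlen e X g" "eval e vs = g" using wlen_ex[OF assms(2)] by blast
  ultimately show ?thesis using wlen_le[of "ws @ vs" X e "f \<circ> g"] by auto
qed

lemma wlen_gen: "s \<in> X \<Longrightarrow> wlen e X (reflection (e s)) \<le> 1"
  using wlen_le[of "[s]" X e "reflection (e s)"] by auto

fun alt :: "nat \<Rightarrow> 's \<Rightarrow> 's \<Rightarrow> 's list" where
  "alt 0 x y = []"
| "alt (Suc n) x y = alt n y x @ [x]"

lemma length_alt[simp]: "length (alt n x y) = n"
  by (induction n arbitrary: x y) auto

lemma set_alt: "set (alt n x y) \<subseteq> {x, y}"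
  by (induction n arbitrary: x y) auto

lemma drop_alt: "j \<le> n \<Longrightarrow> drop j (alt n x y) = alt (n - j) x y"
proof (induction n arbitrary: x y j)
  case 0 then show ?case by simp
next
  case (Suc n)
  show ?case
  proof (cases "j = Suc n")
    case True then show ?thesis by simp
  next
    case False
    then have "j \<le> n" using Suc.prems by simp
    then have "drop j (alt (Suc n) x y) = drop j (alt n y x) @ [x]" by simp
    also have "\<dots> = alt (n - j) y x @ [x]" using Suc.IH[OF \<open>j \<le> n\<close>] by simp
    also have "\<dots> = alt (Suc n - j) x y" using \<open>j \<le> n\<close> by (simp add: Suc_diff_le)
    finally show ?thesis .
  qed
qed

definition noadj :: "'s list \<Rightarrow> bool" where
  "noadj ws \<longleftrightarrow> (\<forall>xs a ys. ws \<noteq> xs @ [a, a] @ ys)"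

lemma alt_char:
  "ws \<noteq> [] \<Longrightarrow> last ws = x \<Longrightarrow> set ws \<subseteq> {x, y} \<Longrightarrow> x \<noteq> y \<Longrightarrow> noadj ws
   \<Longrightarrow> ws = alt (length ws) x y"
proof (induction ws arbitrary: x y rule: rev_induct)
  case Nil then show ?case by simp
next
  case (snoc a zs)
  then have ax: "a = x" by simp
  show ?case
  proof (cases "zs = []")
    case True then show ?thesis using ax by simp
  next
    case False
    then obtain zs' z where zs: "zs = zs' @ [z]" by (metis rev_exhaust)
    have "z \<noteq> x"
    proof
      assume "z = x"
      then have "zs @ [a] = zs' @ [x, x] @ []" using zs ax by simp
      then show False using snoc.prems(5) unfolding noadj_def by blast
    qed
    then have zy: "z = y" using snoc.prems(3) zs by auto
    have "noadj zs" using snoc.prems(5) unfolding noadj_def by (metis append.assoc)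
    have "zs = alt (length zs) y x"
      using snoc.IH[of y x] zs zy snoc.prems(3,4) \<open>noadj zs\<close> False by auto
    then show ?thesis using ax by simp
  qed
qed

lemma eval_linear: "linear (eval e ws)"
proof (induction ws)
  case Nil then show ?case by (simp only: eval_Nil) (rule linear_id)
next
  case (Cons a ws) then show ?case by (simp only: eval_Cons) (rule linear_compose[OF Cons.IH refl_linear])
qed

lemma eval_fix:
  "set ws \<subseteq> {x, y} \<Longrightarrow> q \<bullet> e x = 0 \<Longrightarrow> q \<bullet> e y = 0 \<Longrightarrow> eval e ws q = q"
  by (induction ws) (auto simp: refl_orth)

lemma sin_rec: "sin ((a::real) + th) = 2 * cos th * sin a - sin (a - th)"
  by (simp add: sin_add sin_diff)

lemma vec_id:
  fixes P Q :: "'a::real_vector"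
  assumes "a2 = 2*c*a1 - a0" "a1 = 2*c*a0 - am"
  shows "- (a0 *\<^sub>R Q + am *\<^sub>R P) + (2*c) *\<^sub>R (a1 *\<^sub>R Q + a0 *\<^sub>R P) = a2 *\<^sub>R Q + a1 *\<^sub>R P"
proof -
  have "- (a0 *\<^sub>R Q + am *\<^sub>R P) + (2*c) *\<^sub>R (a1 *\<^sub>R Q + a0 *\<^sub>R P)
      = (2*c*a1 - a0) *\<^sub>R Q + (2*c*a0 - am) *\<^sub>R P" by (simp add: algebra_simps)
  also have "\<dots> = a2 *\<^sub>R Q + a1 *\<^sub>R P" by (simp only: assms(1)[symmetric] assms(2)[symmetric])
  finally show ?thesis .
qed

lemma alt_formula:
  fixes e :: "'s \<Rightarrow> 'a::real_inner"
  shows "e x \<bullet> e x = 1 \<Longrightarrow> e y \<bullet> e y = 1 \<Longrightarrow> e x \<bullet> e y = - cos th \<Longrightarrow>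
    sin th *\<^sub>R eval e (alt n x y) (e y) =
      sin (real (Suc n) * th) *\<^sub>R e (if even n then y else x) + sin (real n * th) *\<^sub>R e (if even n then x else y)
  \<and> sin th *\<^sub>R eval e (alt n x y) (e x) =
      - (sin (real n * th) *\<^sub>R e (if even n then y else x) + sin ((real n - 1) * th) *\<^sub>R e (if even n then x else y))"
proof (induction n arbitrary: x y)
  case 0 then show ?case by simp
next
  case (Suc n)
  have yx: "e y \<bullet> e x = - cos th" using Suc.prems(3) by (simp add: inner_commute)
  note IH = Suc.IH[OF Suc.prems(2,1) yx]
  define A where "A = eval e (alt n y x)"
  have linA: "linear A" unfolding A_def by (rule eval_linear)
  have ex0: "e x \<noteq> 0" using Suc.prems(1) by auto
  have rxx: "reflection (e x) (e x) = - e x" using refl_self[OF ex0] .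
  have rxy: "reflection (e x) (e y) = e y + (2 * cos th) *\<^sub>R e x"
    unfolding reflection_def using yx Suc.prems(1) by simp
  have ev: "eval e (alt (Suc n) x y) = A \<circ> reflection (e x)" unfolding A_def by simp
  define P where "P = e (if even n then y else x)"
  define Q where "Q = e (if even n then x else y)"
  have IH1: "sin th *\<^sub>R A (e x) = sin (real (Suc n) * th) *\<^sub>R Q + sin (real n * th) *\<^sub>R P"
    using IH unfolding A_def P_def Q_def by (cases "even n") auto
  have IH2: "sin th *\<^sub>R A (e y) = - (sin (real n * th) *\<^sub>R Q + sin ((real n - 1) * th) *\<^sub>R P)"
    using IH unfolding A_def P_def Q_def by (cases "even n") auto
  have P': "e (if even (Suc n) then x else y) = P" unfolding P_def by auto
  have Q': "e (if even (Suc n) then y else x) = Q" unfolding Q_def by auto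
  have c1: "sin th *\<^sub>R eval e (alt (Suc n) x y) (e x) = - (sin th *\<^sub>R A (e x))"
    using ev rxx linear_neg[OF linA] by simp
  have c2: "sin th *\<^sub>R eval e (alt (Suc n) x y) (e y) = sin th *\<^sub>R A (e y) + (2 * cos th) *\<^sub>R (sin th *\<^sub>R A (e x))"
    using ev rxy linear_add[OF linA] linear_scale[OF linA] by (simp add: algebra_simps)
  have t1: "sin (real (Suc (Suc n)) * th) = 2 * cos th * sin (real (Suc n) * th) - sin (real n * th)"
    using sin_rec[of "real (Suc n) * th" th] by (simp add: algebra_simps)
  have t2: "sin (real (Suc n) * th) = 2 * cos th * sin (real n * th) - sin ((real n - 1) * th)"
    using sin_rec[of "real n * th" th] by (simp add: algebra_simps)
  have r1: "sin th *\<^sub>R eval e (alt (Suc n) x y) (e y) =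
      sin (real (Suc (Suc n)) * th) *\<^sub>R Q + sin (real (Suc n) * th) *\<^sub>R P"
    unfolding c2 IH1 IH2 by (rule vec_id[OF t1 t2])
  have r2: "sin th *\<^sub>R eval e (alt (Suc n) x y) (e x) =
      - (sin (real (Suc n) * th) *\<^sub>R Q + sin ((real (Suc n) - 1) * th) *\<^sub>R P)"
    unfolding c1 IH1 by simp
  show ?case using r1 r2 unfolding P' Q' by simp
qed

lemma braid_vec:
  fixes e :: "'s \<Rightarrow> 'a::real_inner"
  assumes ux: "e x \<bullet> e x = 1" and uy: "e y \<bullet> e y = 1" and xy: "e x \<bullet> e y = - cos (pi / real m)"
    and m2: "m \<ge> 2"
  shows "eval e (alt m x y) (e y) = eval e (alt m y x) (e y)"
proof -
  define th where "th = pi / real m"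
  have mpos: "real m > 0" using m2 by simp
  have th0: "0 < th" unfolding th_def using mpos by simp
  have thpi: "th < pi" unfolding th_def using m2 by (simp add: field_simps)
  have sth: "sin th > 0" using sin_gt_zero[OF th0 thpi] .
  have mth: "real m * th = pi" unfolding th_def using mpos by simp
  have s1: "sin (real m * th) = 0" using mth by simp
  have s2: "sin (real (Suc m) * th) = - sin th"
  proof -
    have "real (Suc m) * th = th + pi" using mth by (simp add: algebra_simps)
    then show ?thesis by simp
  qed
  have s3: "sin ((real m - 1) * th) = sin th"
  proof -
    have "(real m - 1) * th = pi - th" using mth by (simp add: algebra_simps)
    then show ?thesis by simp
  qed
  have yx: "e y \<bullet> e x = - cos th" using xy by (simp add: inner_commute th_def)
  have F1: "sin th *\<^sub>R eval e (alt m x y) (e y) = - (sin th *\<^sub>R e (if even m then y else x))"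
    using conjunct1[OF alt_formula[of e x y th m, OF ux uy xy[folded th_def]]] s1 s2 by simp
  have F2: "sin th *\<^sub>R eval e (alt m y x) (e y) = - (sin th *\<^sub>R e (if even m then y else x))"
    using conjunct2[OF alt_formula[of e y x th m, OF uy ux yx]] s1 s3 by simp
  have "sin th *\<^sub>R eval e (alt m x y) (e y) = sin th *\<^sub>R eval e (alt m y x) (e y)"
    using F1 F2 by simp
  then show ?thesis using sth by simp
qed

lemma braid:
  fixes e :: "'s \<Rightarrow> 'a::euclidean_space"
  assumes ux: "e x \<bullet> e x = 1" and uy: "e y \<bullet> e y = 1" and xy: "e x \<bullet> e y = - cos (pi / real m)"
    and m2: "m \<ge> 2"
  shows "eval e (alt m x y) = eval e (alt m y x)"
proof
  fix v
  have yx: "e y \<bullet> e x = - cos (pi / real m)" using xy by (simp add: inner_commute)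
  have b1: "eval e (alt m x y) (e y) = eval e (alt m y x) (e y)" by (rule braid_vec[of e x y m, OF ux uy xy m2])
  have b2: "eval e (alt m x y) (e x) = eval e (alt m y x) (e x)" by (rule braid_vec[of e y x m, OF uy ux yx m2, symmetric])
  obtain p q where p: "p \<in> span {e x, e y}" and q: "\<And>w. w \<in> span {e x, e y} \<Longrightarrow> orthogonal q w"
    and v: "v = p + q"
    by (rule orthogonal_subspace_decomp_exists[of "{e x, e y}" v]) blast
  have qx: "q \<bullet> e x = 0" using q[of "e x"] by (simp add: span_base orthogonal_def)
  have qy: "q \<bullet> e y = 0" using q[of "e y"] by (simp add: span_base orthogonal_def)
  from p obtain a where "p - a *\<^sub>R e x \<in> span {e y}" using span_breakdown_eq[of p "e x" "{e y}"] by auto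
  then obtain b where pab: "p = a *\<^sub>R e x + b *\<^sub>R e y" unfolding span_singleton
    by (auto simp: algebra_simps) (metis add.commute diff_add_cancel)
  have f1: "eval e (alt m x y) q = q" by (rule eval_fix[of "alt m x y" x y, OF set_alt qx qy])
  have f2: "eval e (alt m y x) q = q" by (rule eval_fix[of "alt m y x" x y, OF _ qx qy]) (use set_alt[of m y x] in blast)
  note l1 = eval_linear[of e "alt m x y"] and l2 = eval_linear[of e "alt m y x"]
  show "eval e (alt m x y) v = eval e (alt m y x) v"
    unfolding v pab
    using b1 b2 f1 f2 by (simp add: linear_add[OF l1] linear_add[OF l2] linear_scale[OF l1] linear_scale[OF l2])
qed

lemma rank2:
  fixes e :: "'s \<Rightarrow> 'a::euclidean_space"
  assumes st: "s \<noteq> t" and us: "e s \<bullet> e s = 1" and ut: "e t \<bullet> e t = 1"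
    and cst: "e t \<bullet> e s = - cos (pi / real m)" and m2: "m \<ge> 2"
    and u: "u \<in> generated ((\<lambda>x. reflection (e x)) ` {s, t})"
    and le: "wlen e {s, t} u \<le> wlen e {s, t} (u \<circ> reflection (e s))"
  shows "\<exists>a b. a \<ge> 0 \<and> b \<ge> 0 \<and> u (e s) = a *\<^sub>R e s + b *\<^sub>R e t"
proof -
  define k where "k = wlen e {s, t} u"
  obtain ws where ws: "set ws \<subseteq> {s, t}" "length ws = k" "eval e ws = u"
    using wlen_ex[OF u] unfolding k_def by blast
  have red: "\<And>ws'. set ws' \<subseteq> {s, t} \<Longrightarrow> eval e ws' = u \<Longrightarrow> k \<le> length ws'"
    unfolding k_def by (rule wlen_le)
  have es0: "e s \<noteq> 0" using us by auto
  have et0: "e t \<noteq> 0" using ut by auto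
  have rs: "reflection (e s) \<circ> reflection (e s) = id" using refl_comp_self[OF es0] .
  have na: "noadj ws" unfolding noadj_def
  proof (intro allI notI)
    fix xs a ys assume h: "ws = xs @ [a, a] @ ys"
    then have "a \<in> {s, t}" using ws(1) by auto
    then have "e a \<noteq> 0" using es0 et0 by auto
    then have "eval e (xs @ ys) = u" using ws(3) h refl_comp_self[of "e a"]
      by (simp add: comp_assoc) (metis comp_assoc comp_id)
    moreover have "set (xs @ ys) \<subseteq> {s, t}" using ws(1) h by auto
    ultimately have "k \<le> length (xs @ ys)" using red by blast
    then show False using h ws(2) by simp
  qed
  show ?thesis
  proof (cases "ws = []")
    case True
    then have "u = id" using ws by simp
    then show ?thesis by (intro exI[of _ 1] exI[of _ 0]) simp
  next
    case False
    then obtain zs z where zs: "ws = zs @ [z]" by (metis rev_exhaust)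
    have "z \<noteq> s"
    proof
      assume "z = s"
      then have "u = eval e zs \<circ> reflection (e s)" using ws(3) zs by simp
      then have "u \<circ> reflection (e s) = eval e zs \<circ> (reflection (e s) \<circ> reflection (e s))" by (simp add: comp_assoc)
      then have "u \<circ> reflection (e s) = eval e zs" using rs by simp
      then have "wlen e {s, t} (u \<circ> reflection (e s)) \<le> length zs"
        using wlen_le[of zs "{s,t}" e] ws(1) zs by auto
      then show False using le ws(2) zs unfolding k_def[symmetric] by simp
    qed
    then have zt: "z = t" using ws(1) zs by auto
    have ws1': "set ws \<subseteq> {t, s}" using ws(1) by auto
    have wsalt: "ws = alt k t s"
      using alt_char[of ws t s, OF False _ ws1' _ na] zs zt ws(2) st by auto
    show ?thesis
    proof (cases "k \<ge> m")
      case True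
      define pre where "pre = take (k - m) ws"
      have d: "drop (k - m) ws = alt m t s" using drop_alt[of "k - m" k t s] True wsalt by simp
      have ws2: "ws = pre @ alt m t s" unfolding pre_def using d by (metis append_take_drop_id)
      have mm: "m = Suc (m - 1)" using m2 by simp
      have br: "eval e (alt m t s) = eval e (alt m s t)" by (rule braid[of e t s m, OF ut us cst m2])
      have "eval e (alt m s t) = eval e (alt (m - 1) t s) \<circ> reflection (e s)"
        by (subst mm) simp
      then have "u = (eval e pre \<circ> eval e (alt (m - 1) t s)) \<circ> reflection (e s)"
        using ws(3) ws2 br by (simp add: comp_assoc)
      then have "u \<circ> reflection (e s) = (eval e pre \<circ> eval e (alt (m - 1) t s)) \<circ> (reflection (e s) \<circ> reflection (e s))"
        by (simp add: comp_assoc)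
      then have "u \<circ> reflection (e s) = eval e (pre @ alt (m - 1) t s)"
        using rs by simp
      moreover have "set (pre @ alt (m - 1) t s) \<subseteq> {s, t}"
        using ws(1) set_alt[of "m - 1" t s] unfolding pre_def by (auto dest: in_set_takeD)
      ultimately have "wlen e {s, t} (u \<circ> reflection (e s)) \<le> length (pre @ alt (m - 1) t s)"
        using wlen_le by metis
      moreover have "length (pre @ alt (m - 1) t s) = k - 1" unfolding pre_def using ws(2) True m2 by simp
      ultimately show ?thesis using le m2 True unfolding k_def[symmetric] by simp
    next
      case False
      define th where "th = pi / real m"
      have mpos: "real m > 0" using m2 by simp
      have th0: "0 < th" unfolding th_def using mpos by simp
      have thpi: "th < pi" unfolding th_def using m2 by (simp add: field_simps)
      have sth: "sin th > 0" using sin_gt_zero[OF th0 thpi] .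
      have km: "real (Suc k) \<le> real m" using False by simp
      have "pi * real (Suc k) \<le> pi * real m" using km by (rule mult_left_mono) simp
      then have b1: "real (Suc k) * th \<le> pi" unfolding th_def using mpos
        by (simp add: field_simps)
      have sa: "sin (real (Suc k) * th) \<ge> 0" by (rule sin_ge_zero) (use th0 b1 in auto)
      have sb: "sin (real k * th) \<ge> 0" by (rule sin_ge_zero) (use th0 b1 in \<open>auto simp: algebra_simps\<close>)
      have F: "sin th *\<^sub>R u (e s) = sin (real (Suc k) * th) *\<^sub>R e (if even k then s else t)
            + sin (real k * th) *\<^sub>R e (if even k then t else s)"
        using conjunct1[OF alt_formula[of e t s th k, OF ut us cst[folded th_def]]] ws(3) wsalt by simp
      define P where "P = e (if even k then s else t)"
      define Q where "Q = e (if even k then t else s)"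
      have "u (e s) = inverse (sin th) *\<^sub>R (sin th *\<^sub>R u (e s))" using sth by simp
      also have "\<dots> = inverse (sin th) *\<^sub>R (sin (real (Suc k) * th) *\<^sub>R P + sin (real k * th) *\<^sub>R Q)"
        unfolding P_def Q_def by (simp only: F)
      also have "\<dots> = (sin (real (Suc k) * th) / sin th) *\<^sub>R P + (sin (real k * th) / sin th) *\<^sub>R Q"
        by (simp only: scaleR_add_right scaleR_scaleR divide_inverse mult.commute)
      finally have F': "u (e s) = (sin (real (Suc k) * th) / sin th) *\<^sub>R P + (sin (real k * th) / sin th) *\<^sub>R Q" .
      show ?thesis
      proof (cases "even k")
        case True then show ?thesis using F' sa sb sth unfolding P_def Q_def by (intro exI[of _ "sin (real (Suc k) * th) / sin th"] exI[of _ "sin (real k * th) / sin th"]) simp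
      next
        case False then show ?thesis using F' sa sb sth unfolding P_def Q_def by (intro exI[of _ "sin (real k * th) / sin th"] exI[of _ "sin (real (Suc k) * th) / sin th"]) (simp add: add.commute)
      qed
    qed
  qed
qed

locale cox =
  fixes S :: "'s set" and m :: "'s \<Rightarrow> 's \<Rightarrow> nat" and e :: "'s \<Rightarrow> 'a::euclidean_space"
  assumes real: "geometric_realisation S m e"
begin

lemma R: "finite S \<and> inj_on e S \<and> independent (e ` S) \<and> span (e ` S) = UNIV \<and>
     (\<forall>s\<in>S. e s \<bullet> e s = 1) \<and>
     (\<forall>s\<in>S. \<forall>t\<in>S. s \<noteq> t \<longrightarrow> m s t = m t s \<and> m s t \<ge> 2 \<and>
         e s \<bullet> e t = - cos (pi / real (m s t)))"
  using real unfolding geometric_realisation_def .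
lemma finS: "finite S" using R by (rule conjunct1)
lemma injS: "inj_on e S" using R by (elim conjE)
lemma indepS: "independent (e ` S)" using R by (elim conjE)
lemma spanS: "span (e ` S) = UNIV" using R by (elim conjE)
lemma unit: "s \<in> S \<Longrightarrow> e s \<bullet> e s = 1" using R by (elim conjE) (erule bspec)
lemma angle: "s \<in> S \<Longrightarrow> t \<in> S \<Longrightarrow> s \<noteq> t \<Longrightarrow> m s t \<ge> 2 \<and> e s \<bullet> e t = - cos (pi / real (m s t))"
proof -
  assume a: "s \<in> S" "t \<in> S" "s \<noteq> t"
  have "\<forall>s\<in>S. \<forall>t\<in>S. s \<noteq> t \<longrightarrow> m s t = m t s \<and> m s t \<ge> 2 \<and> e s \<bullet> e t = - cos (pi / real (m s t))"
    using R by (elim conjE)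
  then have "m s t = m t s \<and> m s t \<ge> 2 \<and> e s \<bullet> e t = - cos (pi / real (m s t))" using a by blast
  then show ?thesis by (elim conjE) (intro conjI)
qed
lemma e0: "s \<in> S \<Longrightarrow> e s \<noteq> 0" using unit by fastforce

lemma rr: "s \<in> S \<Longrightarrow> reflection (e s) \<circ> reflection (e s) = id"
  using refl_comp_self e0 by blast

lemma gen_props:
  assumes "g \<in> generated ((\<lambda>s. reflection (e s)) ` X)" "X \<subseteq> S"
  shows "linear g \<and> (\<forall>x y. g x \<bullet> g y = x \<bullet> y) \<and> bij g"
proof -
  have inv: "\<exists>f'\<in>generated ((\<lambda>s. reflection (e s)) ` X). f' \<circ> g = id \<and> g \<circ> f' = id"
    using gen_inverse[OF _ assms(1)] rr assms(2) by blast
  then have "bij g" using o_bij by blast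
  moreover have "linear g \<and> (\<forall>x y. g x \<bullet> g y = x \<bullet> y)"
    using assms
  proof (induction g rule: generated.induct)
    case gen_id then show ?case by (simp add: linear_id[unfolded id_def])
  next
    case (gen_step x g)
    then obtain s where s: "s \<in> S" "x = reflection (e s)" by auto
    have "linear (x \<circ> g)" using gen_step s refl_linear linear_compose by blast
    moreover have "\<forall>a b. (x \<circ> g) a \<bullet> (x \<circ> g) b = a \<bullet> b"
      using gen_step s refl_inner[OF e0[OF s(1)]] by simp
    ultimately show ?case by blast
  qed
  ultimately show ?thesis by blast
qed

definition pos :: "'a \<Rightarrow> bool" where
  "pos v \<longleftrightarrow> (\<exists>c. (\<forall>s\<in>S. 0 \<le> c s) \<and> v = (\<Sum>s\<in>S. c s *\<^sub>R e s))"

lemma pos_add: "pos a \<Longrightarrow> pos b \<Longrightarrow> pos (a + b)"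
  unfolding pos_def
proof (elim exE conjE)
  fix c d assume "\<forall>s\<in>S. 0 \<le> c s" "a = (\<Sum>s\<in>S. c s *\<^sub>R e s)" "\<forall>s\<in>S. 0 \<le> d s" "b = (\<Sum>s\<in>S. d s *\<^sub>R e s)"
  then show "\<exists>c. (\<forall>s\<in>S. 0 \<le> c s) \<and> a + b = (\<Sum>s\<in>S. c s *\<^sub>R e s)"
    by (intro exI[of _ "\<lambda>s. c s + d s"]) (auto simp: scaleR_add_left sum.distrib)
qed

lemma pos_scale: "pos a \<Longrightarrow> 0 \<le> k \<Longrightarrow> pos (k *\<^sub>R a)"
  unfolding pos_def
proof (elim exE conjE)
  fix c assume "\<forall>s\<in>S. 0 \<le> c s" "a = (\<Sum>s\<in>S. c s *\<^sub>R e s)" "0 \<le> k"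
  then show "\<exists>c. (\<forall>s\<in>S. 0 \<le> c s) \<and> k *\<^sub>R a = (\<Sum>s\<in>S. c s *\<^sub>R e s)"
    by (intro exI[of _ "\<lambda>s. k * c s"]) (auto simp: scaleR_sum_right)
qed

lemma pos_e: assumes "s \<in> S" shows "pos (e s)"
proof -
  have "(\<Sum>t\<in>S. (if t = s then 1 else 0) *\<^sub>R e t) = (\<Sum>t\<in>S. if t = s then e t else 0)"
    by (rule sum.cong) auto
  also have "\<dots> = e s" using assms finS by (simp add: sum.delta)
  finally show ?thesis unfolding pos_def by (intro exI[of _ "\<lambda>t. if t = s then 1 else 0"]) auto
qed

abbreviation G where "G \<equiv> coxeter_group S e"

lemma G_def': "G = generated ((\<lambda>s. reflection (e s)) ` S)" unfolding coxeter_group_def ..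

lemma main_pos:
  "w \<in> G \<Longrightarrow> s \<in> S \<Longrightarrow> wlen e S w \<le> wlen e S (w \<circ> reflection (e s)) \<Longrightarrow> pos (w (e s))"
proof (induction "wlen e S w" arbitrary: w s rule: less_induct)
  case less
  note wG = less.prems(1) and sS = less.prems(2) and wle = less.prems(3)
  obtain ws where ws: "set ws \<subseteq> S" "length ws = wlen e S w" "eval e ws = w"
    using wlen_ex[OF wG[unfolded G_def']] by blast
  show ?case
  proof (cases "ws = []")
    case True
    then have "w = id" using ws by simp
    then show ?thesis using pos_e[OF sS] by simp
  next
    case False
    then obtain zs t where zs: "ws = zs @ [t]" by (metis rev_exhaust)
    have tS: "t \<in> S" using ws(1) zs by auto
    have wzt: "w = eval e zs \<circ> reflection (e t)" using ws(3) zs by simp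
    have zsG: "eval e zs \<in> G" unfolding G_def' gen_eval using ws(1) zs by auto
    have wt: "w \<circ> reflection (e t) = eval e zs" using wzt rr[OF tS] by (simp add: comp_assoc)
    have zlen: "wlen e S (eval e zs) \<le> length zs" using wlen_le[of zs S e] ws(1) zs by auto
    have zlen2: "length zs < wlen e S w" using ws(2) zs by simp
    have ts: "t \<noteq> s"
    proof
      assume "t = s"
      then show False using wt zlen zlen2 wle by simp
    qed
    define I where "I = {s, t}"
    define GI where "GI = generated ((\<lambda>s. reflection (e s)) ` I)"
    have IS: "I \<subseteq> S" unfolding I_def using sS tS by auto
    define A where "A = {(v, u). v \<in> G \<and> u \<in> GI \<and> w = v \<circ> u \<and> wlen e S v + wlen e I u \<le> wlen e S w}"
    have rtGI: "reflection (e t) \<in> GI" unfolding GI_def I_def by (rule gen_gen) auto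
    have rsGI: "reflection (e s) \<in> GI" unfolding GI_def I_def by (rule gen_gen) auto
    have "(eval e zs, reflection (e t)) \<in> A"
      unfolding A_def using zsG rtGI wzt zlen zlen2 wlen_gen[of t I e] unfolding I_def by auto
    then obtain vu where vuA: "vu \<in> A" and vumin: "\<And>y. y \<in> A \<Longrightarrow> wlen e S (fst vu) \<le> wlen e S (fst y)"
      using ex_has_least_nat[of "\<lambda>p. p \<in> A" "(eval e zs, reflection (e t))" "\<lambda>p. wlen e S (fst p)"] by blast
    obtain v u where vu: "vu = (v, u)" by (cases vu)
    have vG: "v \<in> G" and uGI: "u \<in> GI" and wvu: "w = v \<circ> u" and lsum: "wlen e S v + wlen e I u \<le> wlen e S w"
      using vuA vu unfolding A_def by auto
    have vmin: "\<And>v' u'. (v', u') \<in> A \<Longrightarrow> wlen e S v \<le> wlen e S v'"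
      using vumin vu by fastforce
    have vlt: "wlen e S v < wlen e S w"
      using vmin[OF \<open>(eval e zs, reflection (e t)) \<in> A\<close>] zlen zlen2 by simp
    have vx: "wlen e S v \<le> wlen e S (v \<circ> reflection (e x))" if xI: "x \<in> I" for x
    proof (rule ccontr)
      assume "\<not> ?thesis"
      then have lt: "wlen e S (v \<circ> reflection (e x)) < wlen e S v" by simp
      have xS: "x \<in> S" using xI IS by auto
      have rxGI: "reflection (e x) \<in> GI" unfolding GI_def using xI by (intro gen_gen) auto
      have v'G: "v \<circ> reflection (e x) \<in> G" unfolding G_def'
        by (rule gen_comp[OF vG[unfolded G_def'] gen_gen]) (use xS in auto)
      have u'GI: "reflection (e x) \<circ> u \<in> GI" using rxGI uGI unfolding GI_def by (rule gen_comp)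
      have "wlen e I (reflection (e x) \<circ> u) \<le> wlen e I (reflection (e x)) + wlen e I u"
        using wlen_comp rxGI uGI unfolding GI_def by blast
      then have l2: "wlen e I (reflection (e x) \<circ> u) \<le> wlen e I u + 1" using wlen_gen[OF xI, of e] by simp
      have "(v \<circ> reflection (e x)) \<circ> (reflection (e x) \<circ> u) = v \<circ> (reflection (e x) \<circ> reflection (e x)) \<circ> u"
        by (simp add: comp_assoc)
      also have "\<dots> = v \<circ> u" using rr[OF xS] by simp
      finally have "(v \<circ> reflection (e x)) \<circ> (reflection (e x) \<circ> u) = v \<circ> u" .
      then have inA: "(v \<circ> reflection (e x), reflection (e x) \<circ> u) \<in> A"
        unfolding A_def using v'G u'GI wvu lt l2 lsum by auto
      show False using vmin[OF inA] lt by simp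
    qed
    have sI: "s \<in> I" and tI: "t \<in> I" unfolding I_def by auto
    have posvs: "pos (v (e s))" by (rule less.hyps[OF vlt vG sS vx[OF sI]])
    have posvt: "pos (v (e t))" by (rule less.hyps[OF vlt vG tS vx[OF tI]])
    have ule: "wlen e I u \<le> wlen e I (u \<circ> reflection (e s))"
    proof (rule ccontr)
      assume "\<not> ?thesis"
      then have lt: "wlen e I (u \<circ> reflection (e s)) < wlen e I u" by simp
      have usGI: "u \<circ> reflection (e s) \<in> GI" using uGI rsGI unfolding GI_def by (rule gen_comp)
      have usG: "u \<circ> reflection (e s) \<in> G" unfolding G_def' using usGI unfolding GI_def
        by (rule gen_mono) (use IS in auto)
      have "wlen e S (w \<circ> reflection (e s)) \<le> wlen e S v + wlen e S (u \<circ> reflection (e s))"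
        using wlen_comp[where f=v and X=S and e=e and g="u \<circ> reflection (e s)"] vG usG wvu by (simp add: comp_assoc G_def')
      also have "\<dots> \<le> wlen e S v + wlen e I (u \<circ> reflection (e s))"
        using wlen_mono[of _ e I S] usGI IS unfolding GI_def by auto
      finally show False using lt lsum wle by simp
    qed
    have ang: "m t s \<ge> 2 \<and> e t \<bullet> e s = - cos (pi / real (m t s))" using angle[OF tS sS ts] .
    have uGI': "u \<in> generated ((\<lambda>x. reflection (e x)) ` {s, t})" using uGI unfolding GI_def I_def .
    have ule': "wlen e {s, t} u \<le> wlen e {s, t} (u \<circ> reflection (e s))" using ule unfolding I_def .
    have "\<exists>a b. a \<ge> 0 \<and> b \<ge> 0 \<and> u (e s) = a *\<^sub>R e s + b *\<^sub>R e t"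
      by (rule rank2[of s t e "m t s" u, OF ts[symmetric] unit[OF sS] unit[OF tS] conjunct2[OF ang] conjunct1[OF ang] uGI' ule'])
    then obtain a b where ab: "a \<ge> 0" "b \<ge> 0" "u (e s) = a *\<^sub>R e s + b *\<^sub>R e t" by blast
    have linv: "linear v" using gen_props[of v S] vG by (simp add: G_def')
    have "w (e s) = a *\<^sub>R v (e s) + b *\<^sub>R v (e t)"
      using wvu ab(3) linear_add[OF linv] linear_scale[OF linv] by simp
    then show ?thesis using pos_add[OF pos_scale[OF posvs ab(1)] pos_scale[OF posvt ab(2)]] by simp
  qed
qed

lemma dichotomy:
  assumes wG: "w \<in> G" and sS: "s \<in> S"
  shows "pos (w (e s)) \<or> pos (- w (e s))"
proof (cases "wlen e S w \<le> wlen e S (w \<circ> reflection (e s))")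
  case True then show ?thesis using main_pos[OF wG sS True] by blast
next
  case False
  have w'G: "w \<circ> reflection (e s) \<in> G" unfolding G_def'
    by (rule gen_comp[OF wG[unfolded G_def'] gen_gen]) (use sS in auto)
  have "(w \<circ> reflection (e s)) \<circ> reflection (e s) = w" using rr[OF sS] by (simp add: comp_assoc)
  then have "pos ((w \<circ> reflection (e s)) (e s))" using main_pos[OF w'G sS] False by simp
  moreover have "(w \<circ> reflection (e s)) (e s) = - w (e s)"
  proof -
    have linw: "linear w" using gen_props[of w S] wG by (simp add: G_def')
    show ?thesis using refl_self[OF e0[OF sS]] linear_neg[OF linw] by simp
  qed
  ultimately show ?thesis by simp
qed

end

context cox
begin

lemma coef_unique:
  assumes eq: "(\<Sum>s\<in>S. a s *\<^sub>R e s) = (\<Sum>s\<in>S. b s *\<^sub>R e s)" and sS: "s \<in> S"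
  shows "a s = b s"
proof -
  have z: "(\<Sum>s\<in>S. (a s - b s) *\<^sub>R e s) = 0" using eq by (simp add: scaleR_diff_left sum_subtractf)
  define c where "c = (\<lambda>v. a (inv_into S e v) - b (inv_into S e v))"
  have "(\<Sum>v\<in>e`S. c v *\<^sub>R v) = (\<Sum>s\<in>S. c (e s) *\<^sub>R e s)" by (simp add: sum.reindex[OF injS])
  also have "\<dots> = (\<Sum>s\<in>S. (a s - b s) *\<^sub>R e s)" by (rule sum.cong) (auto simp: c_def inv_into_f_f[OF injS])
  finally have "(\<Sum>v\<in>e`S. c v *\<^sub>R v) = 0" using z by simp
  then have "c (e s) = 0" using indepS[unfolded independent_explicit] sS by blast
  then show ?thesis by (simp add: c_def inv_into_f_f[OF injS sS])
qed

lemma repJ: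
  assumes JS: "J \<subseteq> S" and v: "v \<in> span (e ` J)"
  shows "\<exists>c. (\<forall>s\<in>S. s \<notin> J \<longrightarrow> c s = 0) \<and> v = (\<Sum>s\<in>S. c s *\<^sub>R e s)"
proof -
  have finJ: "finite J" using finite_subset[OF JS finS] .
  have injJ: "inj_on e J" using inj_on_subset[OF injS JS] .
  obtain u where u: "v = (\<Sum>x\<in>e`J. u x *\<^sub>R x)" using v span_finite[of "e ` J"] finJ by auto
  define c where "c = (\<lambda>s. if s \<in> J then u (e s) else 0)"
  have "v = (\<Sum>s\<in>J. u (e s) *\<^sub>R e s)" using u by (simp add: sum.reindex[OF injJ])
  also have "\<dots> = (\<Sum>s\<in>J. c s *\<^sub>R e s)" by (rule sum.cong) (auto simp: c_def)
  also have "\<dots> = (\<Sum>s\<in>S. c s *\<^sub>R e s)"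
    by (rule sum.mono_neutral_right[OF finS JS, symmetric]) (auto simp: c_def)
  finally show ?thesis by (intro exI[of _ c]) (auto simp: c_def)
qed

lemma rep: "\<exists>c. v = (\<Sum>s\<in>S. c s *\<^sub>R e s)"
proof -
  have "v \<in> span (e ` S)" using spanS by simp
  then obtain u where "v = (\<Sum>x\<in>e`S. u x *\<^sub>R x)" using span_finite[of "e ` S"] finS by auto
  then show ?thesis by (intro exI[of _ "\<lambda>s. u (e s)"]) (simp add: sum.reindex[OF injS])
qed

definition ht :: "'a \<Rightarrow> real" where
  "ht v = (\<Sum>s\<in>S. (SOME c. v = (\<Sum>s\<in>S. c s *\<^sub>R e s)) s)"

lemma ht_eq: assumes "v = (\<Sum>s\<in>S. c s *\<^sub>R e s)" shows "ht v = (\<Sum>s\<in>S. c s)"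
proof -
  define c0 where "c0 = (SOME c. v = (\<Sum>s\<in>S. c s *\<^sub>R e s))"
  have "v = (\<Sum>s\<in>S. c0 s *\<^sub>R e s)" unfolding c0_def using someI_ex[OF rep[of v]] .
  then have "\<And>s. s \<in> S \<Longrightarrow> c0 s = c s" using assms coef_unique by metis
  then show ?thesis unfolding ht_def c0_def[symmetric] by (rule sum.cong[OF refl])
qed

definition Phi where "Phi = {g (e t) | g t. g \<in> G \<and> t \<in> S}"

lemma finite_Phi: "finite G \<Longrightarrow> finite Phi"
proof -
  assume "finite G"
  then have "finite ((\<lambda>(g, t). g (e t)) ` (G \<times> S))" using finS by auto
  moreover have "Phi = (\<lambda>(g, t). g (e t)) ` (G \<times> S)" unfolding Phi_def by auto
  ultimately show ?thesis by simp
qed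

lemma refl_props: "s \<in> S \<Longrightarrow> linear (reflection (e s)) \<and> (\<forall>x y. reflection (e s) x \<bullet> reflection (e s) y = x \<bullet> y) \<and> bij (reflection (e s))"
  using refl_linear refl_inner[OF e0] o_bij[OF rr rr] by blast

end

context cox
begin

lemma refl_GJ_pos:
  assumes finG: "finite G" and JS: "J \<subseteq> S"
  shows "\<alpha> \<in> Phi \<Longrightarrow> pos \<alpha> \<Longrightarrow> \<alpha> \<in> span (e ` J) \<Longrightarrow> reflection \<alpha> \<in> coxeter_group J e"
proof (induction "card {\<gamma>\<in>Phi. ht \<gamma> < ht \<alpha>}" arbitrary: \<alpha> rule: less_induct)
  case less
  from less.prems(1) obtain g t0 where g: "g \<in> G" "t0 \<in> S" "\<alpha> = g (e t0)" unfolding Phi_def by blast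
  have gp: "linear g \<and> (\<forall>x y. g x \<bullet> g y = x \<bullet> y) \<and> bij g" using gen_props[of g S] g(1) by (simp add: G_def')
  have aa: "\<alpha> \<bullet> \<alpha> = 1" using gp unit[OF g(2)] g(3) by simp
  obtain c where c: "\<forall>s\<in>S. 0 \<le> c s" "\<alpha> = (\<Sum>s\<in>S. c s *\<^sub>R e s)" using less.prems(2) unfolding pos_def by blast
  obtain d where d: "\<forall>s\<in>S. s \<notin> J \<longrightarrow> d s = 0" "\<alpha> = (\<Sum>s\<in>S. d s *\<^sub>R e s)" using repJ[OF JS less.prems(3)] by blast
  have cd: "(\<Sum>s\<in>S. c s *\<^sub>R e s) = (\<Sum>s\<in>S. d s *\<^sub>R e s)" using c(2) d(2) by (rule HOL.trans[OF sym])
  have cJ: "c s = 0" if sS: "s \<in> S" and sJ: "s \<notin> J" for s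
  proof -
    have "c s = d s" by (rule coef_unique[OF cd sS])
    then show ?thesis using d(1) sS sJ by simp
  qed
  have "\<alpha> \<bullet> \<alpha> = \<alpha> \<bullet> (\<Sum>s\<in>S. c s *\<^sub>R e s)" by (rule arg_cong[where f="\<lambda>x. \<alpha> \<bullet> x", OF c(2)])
  also have "\<dots> = (\<Sum>s\<in>S. c s * (\<alpha> \<bullet> e s))" by (simp add: inner_sum_right)
  finally have sum1: "(\<Sum>s\<in>S. c s * (\<alpha> \<bullet> e s)) = 1" using aa by simp
  obtain u where u: "u \<in> S" "c u > 0" "\<alpha> \<bullet> e u > 0"
  proof (rule ccontr)
    note ob = that
    assume "\<not> thesis"
    have h: "c s * (\<alpha> \<bullet> e s) \<le> 0" if sS: "s \<in> S" for s
    proof (rule ccontr)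
      assume "\<not> c s * (\<alpha> \<bullet> e s) \<le> 0"
      then have "c s * (\<alpha> \<bullet> e s) > 0" by simp
      then have "c s > 0 \<and> \<alpha> \<bullet> e s > 0 \<or> c s < 0 \<and> \<alpha> \<bullet> e s < 0" by (simp add: zero_less_mult_iff)
      then have "c s > 0" "\<alpha> \<bullet> e s > 0" using c(1) sS by force+
      then show False using \<open>\<not> thesis\<close> ob[OF sS] by blast
    qed
    have "(\<Sum>s\<in>S. c s * (\<alpha> \<bullet> e s)) \<le> 0" by (rule sum_nonpos) (use h in auto)
    then show False using sum1 by simp
  qed
  have uJ: "u \<in> J" using cJ[OF u(1)] u(2) by fastforce
  define GJ where "GJ = generated ((\<lambda>s. reflection (e s)) ` J)"
  have ruGJ: "reflection (e u) \<in> GJ" unfolding GJ_def by (rule gen_gen) (use uJ in auto)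
  show ?case
  proof (cases "\<alpha> = e u")
    case True then show ?thesis using ruGJ unfolding GJ_def coxeter_group_def by simp
  next
    case False
    define k where "k = 2 * (\<alpha> \<bullet> e u)"
    have kpos: "k > 0" using u(3) unfolding k_def by simp
    define \<beta> where "\<beta> = \<alpha> - k *\<^sub>R e u"
    have rb: "reflection (e u) \<alpha> = \<beta>" unfolding reflection_def \<beta>_def k_def using unit[OF u(1)] by simp
    have ra: "reflection (e u) \<beta> = \<alpha>" using rb refl_invol[OF e0[OF u(1)]] by metis
    have rug: "reflection (e u) \<circ> g \<in> G" unfolding G_def'
      using generated.gen_step[of "reflection (e u)" _ g] g(1) u(1) by (auto simp: G_def')
    have bPhi: "\<beta> \<in> Phi" unfolding Phi_def using rug g rb by (auto intro!: exI[of _ "reflection (e u) \<circ> g"])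
    have bspan: "\<beta> \<in> span (e ` J)" unfolding \<beta>_def
      using less.prems(3) uJ by (intro span_diff[OF _ span_scale[OF span_base]]) auto
    define c' where "c' = (\<lambda>s. c s - (if s = u then k else 0))"
    have sk: "(\<Sum>s\<in>S. (if s = u then k else 0) *\<^sub>R e s) = k *\<^sub>R e u"
    proof -
      have "(\<Sum>s\<in>S. (if s = u then k else 0) *\<^sub>R e s) = (\<Sum>s\<in>S. if s = u then k *\<^sub>R e s else 0)"
        by (rule sum.cong) auto
      also have "\<dots> = k *\<^sub>R e u" using u(1) finS by (simp add: sum.delta)
      finally show ?thesis .
    qed
    have sk2: "(\<Sum>s\<in>S. (if s = u then k else 0)) = k" using u(1) finS by (simp add: sum.delta)
    have "(\<Sum>s\<in>S. c' s *\<^sub>R e s) = (\<Sum>s\<in>S. c s *\<^sub>R e s) - (\<Sum>s\<in>S. (if s = u then k else 0) *\<^sub>R e s)"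
      unfolding c'_def by (simp only: scaleR_diff_left sum_subtractf)
    then have bc: "\<beta> = (\<Sum>s\<in>S. c' s *\<^sub>R e s)"
      unfolding \<beta>_def sk c(2)[symmetric] by simp
    obtain v0 where v0: "v0 \<in> S" "v0 \<noteq> u" "c v0 > 0"
    proof (rule ccontr)
      note ob = that
      assume "\<not> thesis"
      have z: "c v = 0" if vS: "v \<in> S" and vu: "v \<noteq> u" for v
      proof -
        have "\<not> c v > 0" using \<open>\<not> thesis\<close> ob[OF vS vu] by blast
        then show ?thesis using c(1) vS by force
      qed
      have "\<alpha> = (\<Sum>s\<in>S. if s = u then c s *\<^sub>R e s else 0)" unfolding c(2) by (rule sum.cong) (auto simp: z)
      also have "\<dots> = c u *\<^sub>R e u" using u(1) finS by (simp add: sum.delta)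
      finally have au: "\<alpha> = c u *\<^sub>R e u" .
      then have "c u * c u = 1" using aa unit[OF u(1)] by simp
      then have "(c u - 1) * (c u + 1) = 0" by (simp add: algebra_simps)
      moreover have "c u + 1 \<noteq> 0" using u(2) by simp
      ultimately have "c u = 1" by simp
      then show False using au False by simp
    qed
    have bform: "\<beta> = (reflection (e u) \<circ> g) (e t0)" using rb g(3) by simp
    have posb: "pos \<beta>"
    proof -
      have "pos \<beta> \<or> pos (- \<beta>)" using dichotomy[OF rug g(2)] bform by simp
      moreover have "\<not> pos (- \<beta>)"
      proof
        assume "pos (- \<beta>)"
        then obtain dd where dd: "\<forall>s\<in>S. 0 \<le> dd s" "- \<beta> = (\<Sum>s\<in>S. dd s *\<^sub>R e s)" unfolding pos_def by blast
        have "\<beta> = - (- \<beta>)" by simp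
        also have "\<dots> = - (\<Sum>s\<in>S. dd s *\<^sub>R e s)" using dd(2) by simp
        also have "\<dots> = (\<Sum>s\<in>S. (- dd s) *\<^sub>R e s)" by (simp add: sum_negf)
        finally have "\<beta> = (\<Sum>s\<in>S. (- dd s) *\<^sub>R e s)" .
        then have "c' v0 = - dd v0" using coef_unique[of c' "\<lambda>s. - dd s" v0] bc v0(1) by simp
        moreover have "c' v0 = c v0" unfolding c'_def using v0 by simp
        ultimately show False using v0 dd(1) by force
      qed
      ultimately show ?thesis by blast
    qed
    have "(\<Sum>s\<in>S. c' s) = (\<Sum>s\<in>S. c s) - k"
      unfolding c'_def sum_subtractf sk2 ..
    then have htb: "ht \<beta> = ht \<alpha> - k"
      using ht_eq[OF bc] ht_eq[OF c(2)] by linarith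
    have fin: "finite {\<gamma>\<in>Phi. ht \<gamma> < ht \<alpha>}" using finite_Phi[OF finG] by simp
    have hlt: "ht \<beta> < ht \<alpha>" using htb kpos by linarith
    have sub: "{\<gamma>\<in>Phi. ht \<gamma> < ht \<beta>} \<subseteq> {\<gamma>\<in>Phi. ht \<gamma> < ht \<alpha>}"
    proof
      fix x assume "x \<in> {\<gamma>\<in>Phi. ht \<gamma> < ht \<beta>}"
      then have "x \<in> Phi" "ht x < ht \<beta>" by auto
      then show "x \<in> {\<gamma>\<in>Phi. ht \<gamma> < ht \<alpha>}" using hlt by simp
    qed
    have bin: "\<beta> \<in> {\<gamma>\<in>Phi. ht \<gamma> < ht \<alpha>}" using bPhi hlt by simp
    have bnot: "\<beta> \<notin> {\<gamma>\<in>Phi. ht \<gamma> < ht \<beta>}" by simp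
    have "{\<gamma>\<in>Phi. ht \<gamma> < ht \<beta>} \<subset> {\<gamma>\<in>Phi. ht \<gamma> < ht \<alpha>}"
      using sub bin bnot by blast
    then have cardlt: "card {\<gamma>\<in>Phi. ht \<gamma> < ht \<beta>} < card {\<gamma>\<in>Phi. ht \<gamma> < ht \<alpha>}"
      by (rule psubset_card_mono[OF fin])
    have IH: "reflection \<beta> \<in> coxeter_group J e" using less.hyps[of \<beta>] cardlt bPhi posb bspan by blast
    have rp: "linear (reflection (e u)) \<and> (\<forall>x y. reflection (e u) x \<bullet> reflection (e u) y = x \<bullet> y) \<and> bij (reflection (e u))"
      using refl_props[OF u(1)] .
    have invr: "inv (reflection (e u)) = reflection (e u)" using inv_unique_comp[OF rr[OF u(1)] rr[OF u(1)]] .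
    have "reflection (e u) \<circ> reflection \<beta> \<circ> reflection (e u) = reflection \<alpha>"
      using refl_conj[of "reflection (e u)" \<beta>] rp ra invr by simp
    moreover have "reflection (e u) \<circ> reflection \<beta> \<circ> reflection (e u) \<in> GJ"
      using IH ruGJ unfolding GJ_def coxeter_group_def by (intro gen_comp) auto
    ultimately show ?thesis unfolding GJ_def coxeter_group_def by simp
  qed
qed

end

context cox
begin

lemma refl_GJ:
  assumes finG: "finite G" and JS: "J \<subseteq> S" and gG: "g \<in> G" and tS: "t \<in> S"
    and sp: "g (e t) \<in> span (e ` J)"
  shows "reflection (g (e t)) \<in> coxeter_group J e"
proof -
  have gPhi: "g (e t) \<in> Phi" unfolding Phi_def using gG tS by blast
  have linw: "linear g" using gen_props[of g S] gG by (simp add: G_def')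
  have gt'G: "g \<circ> reflection (e t) \<in> G" unfolding G_def'
    by (rule gen_comp[OF gG[unfolded G_def'] gen_gen]) (use tS in auto)
  have neg: "(g \<circ> reflection (e t)) (e t) = - g (e t)"
    using refl_self[OF e0[OF tS]] linear_neg[OF linw] by simp
  have nPhi: "- g (e t) \<in> Phi" unfolding Phi_def using gt'G tS neg[symmetric] by blast
  have nsp: "- g (e t) \<in> span (e ` J)" using span_neg[OF sp] .
  from dichotomy[OF gG tS] show ?thesis
  proof
    assume "pos (g (e t))"
    then show ?thesis using refl_GJ_pos[OF finG JS gPhi _ sp] by simp
  next
    assume "pos (- g (e t))"
    then have "reflection (- g (e t)) \<in> coxeter_group J e" using refl_GJ_pos[OF finG JS nPhi _ nsp] by simp
    then show ?thesis by (simp add: refl_neg)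
  qed
qed

lemma GJ_diff:
  assumes "h \<in> coxeter_group J e" shows "h v - v \<in> span (e ` J)"
  using assms unfolding coxeter_group_def
proof (induction h rule: generated.induct)
  case gen_id then show ?case by (simp add: span_0)
next
  case (gen_step x h)
  then obtain s where s: "s \<in> J" "x = reflection (e s)" by auto
  have eq: "(x \<circ> h) v - v = (h v - v) - (2 * (h v \<bullet> e s) / (e s \<bullet> e s)) *\<^sub>R e s"
    unfolding s(2) reflection_def by simp
  have "e s \<in> span (e ` J)" using s(1) by (intro span_base) auto
  then have mem: "(h v - v) - (2 * (h v \<bullet> e s) / (e s \<bullet> e s)) *\<^sub>R e s \<in> span (e ` J)"
    using gen_step.IH by (intro span_diff[OF _ span_scale])
  show ?case unfolding eq by (rule mem)
qed

lemma GJ_fix: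
  assumes "h \<in> coxeter_group J e" and "\<forall>s\<in>J. v \<bullet> e s = 0" shows "h v = v"
  using assms(1) unfolding coxeter_group_def
proof (induction h rule: generated.induct)
  case gen_id then show ?case by simp
next
  case (gen_step x h)
  then obtain s where s: "s \<in> J" "x = reflection (e s)" by auto
  then show ?case using gen_step.IH assms(2) refl_orth[of v "e s"] by simp
qed

end

lemma refl_fixed:
  fixes a :: "'a::real_inner"
  assumes "a \<noteq> 0" "reflection a w = w" shows "w \<bullet> a = 0"
proof -
  have "(2 * (w \<bullet> a) / (a \<bullet> a)) *\<^sub>R a = 0" using assms(2) unfolding reflection_def
    by (metis diff_diff_eq2 eq_iff_diff_eq_0)
  then have "2 * (w \<bullet> a) / (a \<bullet> a) = 0" using assms(1) by simp
  then show ?thesis using assms(1) by simp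
qed

theorem proposition7:
  fixes S J :: "'s set" and m :: "'s \<Rightarrow> 's \<Rightarrow> nat"
    and e :: "'s \<Rightarrow> 'a::euclidean_space" and \<sigma> :: "'a \<Rightarrow> 'a"
  assumes real: "geometric_realisation S m e"
    and fin: "finite (coxeter_group S e)"
    and JS: "J \<subseteq> S"
    and sigma_in: "\<sigma> \<in> coxeter_group J e"
    and sigma_neg: "\<forall>v\<in>root_span J e. \<sigma> v = - v"
  shows "{g \<in> coxeter_group S e. g \<circ> \<sigma> = \<sigma> \<circ> g}
       = {g \<in> coxeter_group S e.
            (\<lambda>h. g \<circ> h \<circ> inv g) ` coxeter_group J e = coxeter_group J e}"
proof -
  interpret c: cox S m e using real by (rule cox.intro)
  define GJ where "GJ = coxeter_group J e"
  define GS where "GS = coxeter_group S e"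
  have GSdef: "GS = generated ((\<lambda>s. reflection (e s)) ` S)" unfolding GS_def coxeter_group_def ..
  have GJdef: "GJ = generated ((\<lambda>s. reflection (e s)) ` J)" unfolding GJ_def coxeter_group_def ..
  have props: "linear g \<and> (\<forall>x y. g x \<bullet> g y = x \<bullet> y) \<and> bij g" if "g \<in> GS" for g
    using c.gen_props[of g S] that GSdef by simp
  have invG: "inv g \<in> GS" if gG: "g \<in> GS" for g
  proof -
    obtain f' where f': "f' \<in> GS" "f' \<circ> g = id" "g \<circ> f' = id"
      using gen_inverse[of "(\<lambda>s. reflection (e s)) ` S" g] c.rr gG GSdef by blast
    have "inv g = f'" by (rule inv_unique_comp[OF f'(3) f'(2)])
    then show ?thesis using f'(1) by simp
  qed
  have GJsub: "GJ \<subseteq> GS" unfolding GJdef GSdef using JS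
    by (auto intro: gen_mono[of _ "(\<lambda>s. reflection (e s)) ` J"])
  have sGJ: "\<sigma> \<in> GJ" using sigma_in GJ_def by simp
  have slin: "linear \<sigma>" using props[of \<sigma>] sGJ GJsub by auto
  have sneg: "\<sigma> v = - v" if "v \<in> span (e ` J)" for v
    using sigma_neg that unfolding root_span_def by blast
  have sfix: "\<sigma> v = v" if "\<forall>s\<in>J. v \<bullet> e s = 0" for v
    using c.GJ_fix[OF sigma_in that] .
  have eig: "v \<in> span (e ` J)" if "\<sigma> v = - v" for v
  proof -
    have "\<sigma> v - v \<in> span (e ` J)" using c.GJ_diff[OF sigma_in] .
    then have "(- 1 / 2) *\<^sub>R (\<sigma> v - v) \<in> span (e ` J)" by (rule span_scale)
    moreover have "(- 1 / 2) *\<^sub>R (\<sigma> v - v) = v" using that by (simp add: algebra_simps) (metis scaleR_add_left field_sum_of_halves scaleR_one)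
    ultimately show ?thesis by simp
  qed
  have conj_in: "g \<circ> h \<circ> inv g \<in> GJ" if gG: "g \<in> GS" and comm: "g \<circ> \<sigma> = \<sigma> \<circ> g" and hJ: "h \<in> GJ" for g h
  proof -
    have pg: "linear g \<and> (\<forall>x y. g x \<bullet> g y = x \<bullet> y) \<and> bij g" using props[OF gG] .
    have gi: "g \<circ> inv g = id" using pg by (simp add: bij_is_surj surj_iff[symmetric])
    have ig: "inv g \<circ> g = id" using pg by (simp add: bij_is_inj inj_iff[symmetric])
    have gen: "g \<circ> reflection (e t) \<circ> inv g \<in> GJ" if tJ: "t \<in> J" for t
    proof -
      have tS: "t \<in> S" using tJ JS by auto
      have "e t \<in> span (e ` J)" using tJ by (intro span_base) auto
      then have "\<sigma> (e t) = - e t" by (rule sneg)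
      then have "\<sigma> (g (e t)) = - g (e t)"
        using fun_cong[OF comm, of "e t"] linear_neg[of g "e t"] pg by simp
      then have sp: "g (e t) \<in> span (e ` J)" by (rule eig)
      have gG': "g \<in> c.G" using gG GS_def by simp
      have "reflection (g (e t)) \<in> coxeter_group J e" by (rule c.refl_GJ[OF fin JS gG' tS sp])
      moreover have "g \<circ> reflection (e t) \<circ> inv g = reflection (g (e t))"
        using refl_conj[of g "e t"] pg by blast
      ultimately show ?thesis unfolding GJ_def by simp
    qed
    show ?thesis using hJ unfolding GJdef
    proof (induction h rule: generated.induct)
      case gen_id
      have "g \<circ> id \<circ> inv g = id" using gi by simp
      then show ?case using generated.gen_id by metis
    next
      case (gen_step x h)
      then obtain t where t: "t \<in> J" "x = reflection (e t)" by auto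
      have "(g \<circ> x \<circ> inv g) \<circ> (g \<circ> h \<circ> inv g) = g \<circ> x \<circ> (inv g \<circ> g) \<circ> h \<circ> inv g"
        by (simp add: comp_assoc)
      also have "\<dots> = g \<circ> (x \<circ> h) \<circ> inv g" using ig by (simp add: comp_assoc)
      finally have eq: "g \<circ> (x \<circ> h) \<circ> inv g = (g \<circ> x \<circ> inv g) \<circ> (g \<circ> h \<circ> inv g)" by simp
      have A: "g \<circ> x \<circ> inv g \<in> generated ((\<lambda>s. reflection (e s)) ` J)"
        using gen[OF t(1)] t(2) GJdef by simp
      show ?case unfolding eq by (rule gen_comp[OF A gen_step.IH])
    qed
  qed
  show ?thesis
  proof (rule set_eqI, rule iffI)
    fix g assume "g \<in> {g \<in> coxeter_group S e. g \<circ> \<sigma> = \<sigma> \<circ> g}"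
    then have gG: "g \<in> GS" and comm: "g \<circ> \<sigma> = \<sigma> \<circ> g" unfolding GS_def by auto
    have pg: "linear g \<and> (\<forall>x y. g x \<bullet> g y = x \<bullet> y) \<and> bij g" using props[OF gG] .
    have gi: "g \<circ> inv g = id" using pg by (simp add: bij_is_surj surj_iff[symmetric])
    have ig: "inv g \<circ> g = id" using pg by (simp add: bij_is_inj inj_iff[symmetric])
    have iG: "inv g \<in> GS" using invG[OF gG] .
    have icomm: "inv g \<circ> \<sigma> = \<sigma> \<circ> inv g"
    proof -
      have "inv g \<circ> \<sigma> = inv g \<circ> \<sigma> \<circ> (g \<circ> inv g)" using gi by simp
      also have "\<dots> = inv g \<circ> (g \<circ> \<sigma>) \<circ> inv g" using comm by (simp add: comp_assoc)
      also have "\<dots> = (inv g \<circ> g) \<circ> \<sigma> \<circ> inv g" by (simp add: comp_assoc)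
      also have "\<dots> = \<sigma> \<circ> inv g" using ig by simp
      finally show ?thesis .
    qed
    have iig: "inv (inv g) = g" using pg by (simp add: inv_inv_eq)
    have "(\<lambda>h. g \<circ> h \<circ> inv g) ` GJ = GJ"
    proof
      show "(\<lambda>h. g \<circ> h \<circ> inv g) ` GJ \<subseteq> GJ" using conj_in[OF gG comm] by auto
      show "GJ \<subseteq> (\<lambda>h. g \<circ> h \<circ> inv g) ` GJ"
      proof
        fix h assume hJ: "h \<in> GJ"
        have h'J: "inv g \<circ> h \<circ> g \<in> GJ" using conj_in[OF iG icomm hJ] iig by simp
        have "g \<circ> (inv g \<circ> h \<circ> g) \<circ> inv g = (g \<circ> inv g) \<circ> h \<circ> (g \<circ> inv g)" by (simp add: comp_assoc)
        also have "\<dots> = h" using gi by simp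
        finally show "h \<in> (\<lambda>h. g \<circ> h \<circ> inv g) ` GJ" using h'J by (metis image_eqI)
      qed
    qed
    then show "g \<in> {g \<in> coxeter_group S e. (\<lambda>h. g \<circ> h \<circ> inv g) ` coxeter_group J e = coxeter_group J e}"
      using gG unfolding GS_def GJ_def by simp
  next
    fix g assume "g \<in> {g \<in> coxeter_group S e. (\<lambda>h. g \<circ> h \<circ> inv g) ` coxeter_group J e = coxeter_group J e}"
    then have gG: "g \<in> GS" and img: "(\<lambda>h. g \<circ> h \<circ> inv g) ` GJ = GJ" unfolding GS_def GJ_def by auto
    have pg: "linear g \<and> (\<forall>x y. g x \<bullet> g y = x \<bullet> y) \<and> bij g" using props[OF gG] .
    have ling: "linear g" using pg by simp
    have gin: "g x \<bullet> g y = x \<bullet> y" for x y using pg by simp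
    have gig: "g (inv g y) = y" for y using pg by (simp add: bij_is_surj surj_f_inv_f)
    have igg: "inv g (g y) = y" for y using pg by (simp add: bij_is_inj inv_f_f)
    have ca: "g \<circ> h \<circ> inv g \<in> GJ" if "h \<in> GJ" for h using img that by blast
    have cb: "\<exists>h'\<in>GJ. h = g \<circ> h' \<circ> inv g" if "h \<in> GJ" for h using img that by blast
    have rJ: "reflection (e s) \<in> GJ" if "s \<in> J" for s unfolding GJdef by (rule gen_gen) (use that in auto)
    have es0: "e s \<noteq> 0" if "s \<in> J" for s using c.e0 that JS by auto
    have perp_g: "\<forall>s\<in>J. g v \<bullet> e s = 0" if pv: "\<forall>s\<in>J. v \<bullet> e s = 0" for v
    proof
      fix s assume sJ: "s \<in> J"
      obtain h' where h': "h' \<in> GJ" "reflection (e s) = g \<circ> h' \<circ> inv g" using cb[OF rJ[OF sJ]] by blast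
      have "reflection (e s) (g v) = g (h' v)" using h'(2) igg by simp
      also have "\<dots> = g v" using c.GJ_fix[of h' J v] h'(1) pv GJ_def by simp
      finally show "g v \<bullet> e s = 0" by (rule refl_fixed[OF es0[OF sJ]])
    qed
    have perp_ig: "\<forall>s\<in>J. inv g v \<bullet> e s = 0" if pv: "\<forall>s\<in>J. v \<bullet> e s = 0" for v
    proof
      fix s assume sJ: "s \<in> J"
      have hJ: "g \<circ> reflection (e s) \<circ> inv g \<in> GJ" using ca[OF rJ[OF sJ]] .
      have hJ': "g \<circ> reflection (e s) \<circ> inv g \<in> coxeter_group J e" using hJ GJ_def by simp
      have "(g \<circ> reflection (e s) \<circ> inv g) v = v" by (rule c.GJ_fix[OF hJ' pv])
      then have "reflection (e s) (inv g v) = inv g v" using igg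
        by (metis comp_apply)
      then show "inv g v \<bullet> e s = 0" by (rule refl_fixed[OF es0[OF sJ]])
    qed
    have perp_span: "v \<bullet> w = 0" if "v \<in> span (e ` J)" "\<forall>s\<in>J. w \<bullet> e s = 0" for v w
    proof -
      have "orthogonal w v" using that(1)
        by (rule orthogonal_to_span) (use that(2) in \<open>auto simp: orthogonal_def\<close>)
      then show ?thesis by (simp add: orthogonal_def inner_commute)
    qed
    have decomp: "\<exists>p q. p \<in> span (e ` J) \<and> (\<forall>s\<in>J. q \<bullet> e s = 0) \<and> x = p + q" for x
    proof -
      obtain p q where "p \<in> span (e ` J)" "\<And>w. w \<in> span (e ` J) \<Longrightarrow> orthogonal q w" "x = p + q"
        by (rule orthogonal_subspace_decomp_exists[of "e ` J" x]) blast
      moreover have "\<forall>s\<in>J. q \<bullet> e s = 0" using calculation(2) by (auto simp: orthogonal_def span_base)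
      ultimately show ?thesis by blast
    qed
    have gspan: "g v \<in> span (e ` J)" if vJ: "v \<in> span (e ` J)" for v
    proof -
      obtain p q where pq: "p \<in> span (e ` J)" "\<forall>s\<in>J. q \<bullet> e s = 0" "g v = p + q" using decomp by blast
      have "g v \<bullet> q = g v \<bullet> g (inv g q)" using gig by simp
      also have "\<dots> = v \<bullet> inv g q" using gin by simp
      also have "\<dots> = 0" using perp_span[OF vJ perp_ig[OF pq(2)]] .
      finally have gq: "g v \<bullet> q = 0" .
      have pq0: "p \<bullet> q = 0" using perp_span[OF pq(1) pq(2)] .
      have "q \<bullet> q = g v \<bullet> q - p \<bullet> q" using pq(3) by (simp add: inner_add_left)
      then have "q \<bullet> q = 0" using gq pq0 by simp
      then have "q = 0" by simp
      then show ?thesis using pq by simp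
    qed
    have "g \<circ> \<sigma> = \<sigma> \<circ> g"
    proof
      fix x
      obtain p q where pq: "p \<in> span (e ` J)" "\<forall>s\<in>J. q \<bullet> e s = 0" "x = p + q" using decomp by blast
      have "(g \<circ> \<sigma>) x = g (- p + q)" using pq sneg sfix linear_add[OF slin] by simp
      also have "\<dots> = - g p + g q" using linear_add[OF ling, of "- p" q] linear_neg[OF ling, of p] by simp
      also have "\<dots> = \<sigma> (g p) + \<sigma> (g q)" using sneg[OF gspan[OF pq(1)]] sfix[OF perp_g[OF pq(2)]] by simp
      also have "\<dots> = (\<sigma> \<circ> g) x" using pq(3) linear_add[OF ling] linear_add[OF slin] by simp
      finally show "(g \<circ> \<sigma>) x = (\<sigma> \<circ> g) x" .
    qed
    then show "g \<in> {g \<in> coxeter_group S e. g \<circ> \<sigma> = \<sigma> \<circ> g}" using gG GS_def by simp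
  qed
qed

end
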